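(* Let $s$ be a positive integer with $s\equiv 2\pmod 3$. Then $s(3s-1)\neq (mk^{2}-(m-2)k)p$ for all positive integers $m,k$ with $m\not\equiv 0\pmod 3$ and all primes $p\equiv 1\pmod 3$. *)

theory Defs
  imports "HOL-Computational_Algebra.Primes"
begin

end

theory Submission
  imports Defs
begin

lemma e: "((m::int) * k^2 - (m - 2) * k) mod 3 = ((m mod 3) * (k mod 3)^2 - ((m mod 3) - 2) * (k mod 3)) mod 3"
proof -
  have k2: "(k mod 3)^2 mod 3 = k^2 mod 3" by (simp add: power_mod)
  have "(m mod 3) * (k mod 3)^2 mod 3 = (m mod 3) * ((k mod 3)^2 mod 3) mod 3" by (simp add: mod_mult_right_eq)
  also have "\<dots> = (m mod 3) * (k^2 mod 3) mod 3" using k2 by simp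
  also have "\<dots> = m * k^2 mod 3" by (simp add: mod_mult_eq)
  finally have a: "(m mod 3) * (k mod 3)^2 mod 3 = m * k^2 mod 3" .
  have b1: "((m mod 3) - 2) mod 3 = (m - 2) mod 3" by (simp add: mod_diff_left_eq)
  have "((m mod 3) - 2) * (k mod 3) mod 3 = (((m mod 3) - 2) mod 3) * ((k mod 3) mod 3) mod 3" by (rule mod_mult_eq[symmetric])
  also have "\<dots> = ((m - 2) mod 3) * (k mod 3) mod 3" by (simp only: b1 mod_mod_trivial)
  also have "\<dots> = (m - 2) * k mod 3" by (rule mod_mult_eq)
  finally have b: "((m mod 3) - 2) * (k mod 3) mod 3 = (m - 2) * k mod 3" .
  have "((m mod 3) * (k mod 3)^2 - ((m mod 3) - 2) * (k mod 3)) mod 3 = ((m mod 3) * (k mod 3)^2 mod 3 - ((m mod 3) - 2) * (k mod 3) mod 3) mod 3" by (rule mod_diff_eq[symmetric])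
  also have "\<dots> = (m * k^2 mod 3 - (m - 2) * k mod 3) mod 3" by (simp only: a b)
  also have "\<dots> = (m * k^2 - (m - 2) * k) mod 3" by (rule mod_diff_eq)
  finally show ?thesis by (rule sym)
qed

lemma aux: "(m::int) mod 3 \<noteq> 0 \<Longrightarrow> (m * k^2 - (m - 2) * k) mod 3 \<noteq> 1"
proof -
  assume h: "m mod 3 \<noteq> 0"
  have e: "(m * k^2 - (m - 2) * k) mod 3 = ((m mod 3) * (k mod 3)^2 - ((m mod 3) - 2) * (k mod 3)) mod 3"
    by (rule e)
  have "m mod 3 = 1 \<or> m mod 3 = 2" using h by presburger
  moreover have "k mod 3 = 0 \<or> k mod 3 = 1 \<or> k mod 3 = 2" by presburger
  ultimately show ?thesis unfolding e by (elim disjE) (simp_all add: power2_eq_square)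
qed

theorem lemma2p4:
  fixes s m k p :: int
  assumes "s > 0" and "s mod 3 = 2"
    and "m > 0" and "k > 0" and "m mod 3 \<noteq> 0"
    and "prime p" and "p mod 3 = 1"
  shows "s * (3 * s - 1) \<noteq> (m * k^2 - (m - 2) * k) * p"
proof
  assume eq: "s * (3 * s - 1) = (m * k^2 - (m - 2) * k) * p"
  define X where "X = m * k^2 - (m - 2) * k"
  have xn: "X mod 3 \<noteq> 1" unfolding X_def by (rule aux[OF assms(5)])
  have m1: "(3 * s - 1) mod 3 = 2" by presburger
  have l: "(s * (3 * s - 1)) mod 3 = 1"
  proof -
    have "(s * (3 * s - 1)) mod 3 = ((s mod 3) * ((3 * s - 1) mod 3)) mod 3" by (rule mod_mult_eq[symmetric])
    also have "\<dots> = (2 * 2) mod 3" by (simp only: assms(2) m1)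
    finally show ?thesis by simp
  qed
  have r: "(X * p) mod 3 = X mod 3"
    by (metis assms(7) mod_mult_right_eq mult.right_neutral)
  have "(X * p) mod 3 = 1" using l eq unfolding X_def by simp
  with r xn show False by simp
qed

end
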